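(* Let $G=(V,E)$ be an unweighted undirected graph with $n$ vertices, and let $H$ be a $(1\pm\varepsilon)$-spectral sparsifier of $G$ for some small enough constant $\varepsilon>0$. Let $\widehat{H}$ denote the unweighted version of $H$. If for a pair of vertices $u,v\in V$ we set $s:=d_{\widehat{H}}(u,v)$, then $$R^G_{u,v}=\widetilde{\Omega}\!\left(\frac{s^3}{n^2}\right)\quad\text{and}\quad R^H_{u,v}=\widetilde{\Omega}\!\left(\frac{s^3}{n^2}\right).$$
   Context: A $(1\pm\varepsilon)$-spectral sparsifier of $G$ is a weighted graph $H=(V,E_H,w)$ with $E_H\subseteq E$ and positive weights such that $(1-\varepsilon)L_H\preceq L_G\preceq(1+\varepsilon)L_H$, where $L_G=B_G^\top B_G$ ($B_G$ the edge–vertex incidence matrix), $L_H=B_H^\top WB_H$ ($W$ the diagonal matrix of edge weights), and $A\preceq B$ means $x^\top Ax\le x^\top Bx$ for all $x$. $\widehat{H}$ is the graph $(V,E_H)$ with all weights equal to $1$, and $d_{\widehat{H}}$ its shortest-path (hop) distance. The effective resistance between $u,v$ in a graph $K$ is $R^K_{u,v}=b_{uv}^\top L_K^{+}b_{uv}$, where $b_{uv}=\chi_u-\chi_v$ and $L_K^+$ is the Moore–Penrose pseudoinverse. $\widetilde{\Omega}(f)$ means $f/\mathrm{polylog}(n)$. *)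

theory Defs
  imports Jordan_Normal_Form.Matrix
begin

definition simple_graph :: "nat \<Rightarrow> nat set set \<Rightarrow> bool" where
  "simple_graph n E \<longleftrightarrow> (\<forall>e\<in>E. e \<subseteq> {0..<n} \<and> card e = 2)"

definition chi :: "nat \<Rightarrow> nat \<Rightarrow> real vec" where
  "chi n u = vec n (\<lambda>i. if i = u then 1 else 0)"

definition bvec :: "nat \<Rightarrow> nat \<Rightarrow> nat \<Rightarrow> real vec" where
  "bvec n u v = chi n u - chi n v"

definition edge_mat :: "nat \<Rightarrow> nat set \<Rightarrow> real mat" where
  "edge_mat n e = mat n n (\<lambda>(i,j). if i \<in> e \<and> j \<in> e then (if i = j then 1 else -1) else 0)"

definition laplacian :: "nat \<Rightarrow> nat set set \<Rightarrow> (nat set \<Rightarrow> real) \<Rightarrow> real mat" where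
  "laplacian n E w = mat n n (\<lambda>(i,j). \<Sum>e\<in>E. w e * edge_mat n e $$ (i,j))"

definition ulaplacian :: "nat \<Rightarrow> nat set set \<Rightarrow> real mat" where
  "ulaplacian n E = laplacian n E (\<lambda>_. 1)"

definition loewner_le :: "nat \<Rightarrow> real mat \<Rightarrow> real mat \<Rightarrow> bool" where
  "loewner_le n A B \<longleftrightarrow> (\<forall>x \<in> carrier_vec n. x \<bullet> (A *\<^sub>v x) \<le> x \<bullet> (B *\<^sub>v x))"

definition is_pinv :: "nat \<Rightarrow> real mat \<Rightarrow> real mat \<Rightarrow> bool" where
  "is_pinv n A P \<longleftrightarrow> P \<in> carrier_mat n n \<and> A * P * A = A \<and> P * A * P = P \<and>
     transpose_mat (A * P) = A * P \<and> transpose_mat (P * A) = P * A"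

definition pinv :: "nat \<Rightarrow> real mat \<Rightarrow> real mat" where
  "pinv n A = (THE P. is_pinv n A P)"

definition eff_res :: "nat \<Rightarrow> real mat \<Rightarrow> nat \<Rightarrow> nat \<Rightarrow> real" where
  "eff_res n L u v = bvec n u v \<bullet> (pinv n L *\<^sub>v bvec n u v)"

definition spectral_sparsifier ::
  "nat \<Rightarrow> real \<Rightarrow> nat set set \<Rightarrow> nat set set \<Rightarrow> (nat set \<Rightarrow> real) \<Rightarrow> bool" where
  "spectral_sparsifier n eps E EH w \<longleftrightarrow> EH \<subseteq> E \<and> (\<forall>e\<in>EH. w e > 0) \<and>
     loewner_le n ((1 - eps) \<cdot>\<^sub>m laplacian n EH w) (ulaplacian n E) \<and>
     loewner_le n (ulaplacian n E) ((1 + eps) \<cdot>\<^sub>m laplacian n EH w)"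

definition walk_len :: "nat set set \<Rightarrow> nat \<Rightarrow> nat \<Rightarrow> nat \<Rightarrow> bool" where
  "walk_len E u v k \<longleftrightarrow> (\<exists>p :: nat \<Rightarrow> nat. p 0 = u \<and> p k = v \<and> (\<forall>i<k. {p i, p (Suc i)} \<in> E))"

definition hop_dist :: "nat set set \<Rightarrow> nat \<Rightarrow> nat \<Rightarrow> nat" where
  "hop_dist E u v = (LEAST k. walk_len E u v k)"

end

theory Submission
  imports Defs "Jordan_Normal_Form.Determinant"
begin



definition ebil :: "nat set \<Rightarrow> real vec \<Rightarrow> real vec \<Rightarrow> real" where
  "ebil e y x = (\<Sum>i\<in>e. \<Sum>j\<in>e. y$i * (if i = j then 1 else -1) * x$j)"

lemma ebil_pair: "a \<noteq> b \<Longrightarrow> ebil {a,b} y x = (y$a - y$b) * (x$a - x$b)"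
  by (simp add: ebil_def algebra_simps)

lemma simple_graph_finite: "simple_graph n E \<Longrightarrow> finite E"
  unfolding simple_graph_def
  by (rule finite_subset[of _ "Pow {0..<n}"]) auto

lemma simple_graph_edge: "simple_graph n E \<Longrightarrow> e \<in> E \<Longrightarrow> \<exists>a b. a \<noteq> b \<and> a < n \<and> b < n \<and> e = {a,b}"
  unfolding simple_graph_def card_2_iff by fastforce

lemma simple_graph_sub: "simple_graph n E \<Longrightarrow> e \<in> E \<Longrightarrow> e \<subseteq> {0..<n}"
  unfolding simple_graph_def by auto

lemma sum_if_restrict: "finite A \<Longrightarrow> e \<subseteq> A \<Longrightarrow> (\<Sum>i\<in>A. if i \<in> e then f i else 0) = (\<Sum>i\<in>e. f i)"
  by (metis (lifting) ext inf.absorb_iff2 sum.inter_restrict)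

lemma laplacian_dims[simp]: "dim_row (laplacian n E w) = n" "dim_col (laplacian n E w) = n"
  by (simp_all add: laplacian_def)

lemma laplacian_carrier[simp]: "laplacian n E w \<in> carrier_mat n n"
  by (simp add: laplacian_def)

lemma laplacian_entry: "i<n \<Longrightarrow> j<n \<Longrightarrow> laplacian n E w $$ (i,j) =
   (\<Sum>e\<in>E. w e * (if i\<in>e \<and> j\<in>e then (if i=j then 1 else -1) else 0))"
  by (simp add: laplacian_def edge_mat_def)

lemma laplacian_transpose: "transpose_mat (laplacian n E w) = laplacian n E w"
  by (rule eq_matI) (auto simp: laplacian_entry conj_commute eq_commute)

lemma lap_bilin:
  assumes G: "simple_graph n E" and x: "x \<in> carrier_vec n" and y: "y \<in> carrier_vec n"
  shows "y \<bullet> (laplacian n E w *\<^sub>v x) = (\<Sum>e\<in>E. w e * ebil e y x)"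
proof -
  let ?L = "laplacian n E w"
  have "y \<bullet> (?L *\<^sub>v x) = (\<Sum>i\<in>{0..<n}. y$i * (\<Sum>j\<in>{0..<n}. ?L$$(i,j) * x$j))"
    using x y by (simp add: scalar_prod_def row_def)
  also have "\<dots> = (\<Sum>i\<in>{0..<n}. \<Sum>j\<in>{0..<n}. \<Sum>e\<in>E. w e * (if i\<in>e \<and> j\<in>e then y$i * (if i=j then 1 else -1) * x$j else 0))"
    by (rule sum.cong, simp, simp add: sum_distrib_left laplacian_entry sum_distrib_right, rule sum.cong, simp,
        rule sum.cong, auto)
  also have "\<dots> = (\<Sum>e\<in>E. w e * (\<Sum>i\<in>{0..<n}. \<Sum>j\<in>{0..<n}. (if i\<in>e \<and> j\<in>e then y$i * (if i=j then 1 else -1) * x$j else 0)))"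
    by (simp add: sum_distrib_left sum.swap[of _ E])
  also have "\<dots> = (\<Sum>e\<in>E. w e * ebil e y x)"
  proof (rule sum.cong[OF refl])
    fix e assume e: "e \<in> E"
    have sub: "e \<subseteq> {0..<n}" using simple_graph_sub[OF G e] .
    have "(\<Sum>i\<in>{0..<n}. \<Sum>j\<in>{0..<n}. (if i\<in>e \<and> j\<in>e then y$i * (if i=j then 1 else -1) * x$j else 0))
       = (\<Sum>i\<in>{0..<n}. if i \<in> e then (\<Sum>j\<in>{0..<n}. if j \<in> e then y$i * (if i=j then 1 else -1) * x$j else 0) else 0)"
      by (rule sum.cong) auto
    also have "\<dots> = (\<Sum>i\<in>e. \<Sum>j\<in>e. y$i * (if i=j then 1 else -1) * x$j)"
      using sub by (simp add: sum_if_restrict)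
    finally show "w e * (\<Sum>i\<in>{0..<n}. \<Sum>j\<in>{0..<n}. (if i\<in>e \<and> j\<in>e then y$i * (if i=j then 1 else -1) * x$j else 0)) = w e * ebil e y x"
      by (simp add: ebil_def)
  qed
  finally show ?thesis .
qed




lemma pinv_unique:
  assumes A: "A \<in> carrier_mat n n" and p1: "is_pinv n A P1" and p2: "is_pinv n A P2"
  shows "P1 = P2"
proof -
  have P1: "P1 \<in> carrier_mat n n" and h1: "A*P1*A = A" and h2: "P1*A*P1 = P1"
    and h3: "transpose_mat (A*P1) = A*P1" and h4: "transpose_mat (P1*A) = P1*A"
    using p1 unfolding is_pinv_def by auto
  have P2: "P2 \<in> carrier_mat n n" and g1: "A*P2*A = A" and g2: "P2*A*P2 = P2"
    and g3: "transpose_mat (A*P2) = A*P2" and g4: "transpose_mat (P2*A) = P2*A"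
    using p2 unfolding is_pinv_def by auto
  note c = A P1 P2 transpose_carrier_mat mult_carrier_mat
  have tA1: "transpose_mat A = transpose_mat A * (A*P2)"
  proof -
    have "transpose_mat A = transpose_mat (A*P2*A)" using g1 by simp
    also have "\<dots> = transpose_mat A * transpose_mat (A*P2)"
      by (rule transpose_mult[of _ n n _ n], insert c, auto)
    finally show ?thesis using g3 by simp
  qed
  have tA2: "transpose_mat A = (P1*A) * transpose_mat A"
  proof -
    have "transpose_mat A = transpose_mat (A*P1*A)" using h1 by simp
    also have "\<dots> = transpose_mat A * transpose_mat (A*P1)"
      by (rule transpose_mult[of _ n n _ n], insert c, auto)
    also have "\<dots> = transpose_mat A * (transpose_mat P1 * transpose_mat A)"
      using transpose_mult[of A n n P1 n] c by simp
    also have "\<dots> = transpose_mat (P1*A) * transpose_mat A"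
      using transpose_mult[of P1 n n A n] c by (simp add: assoc_mult_mat[of _ n n _ n _ n])
    finally show ?thesis using h4 by simp
  qed
  have e1: "P1 = P1*A*P2"
  proof -
    have "P1 = P1*(A*P1)" using h2 c by (simp add: assoc_mult_mat[of P1 n n A n P1 n])
    also have "\<dots> = P1*(transpose_mat P1 * transpose_mat A)"
      using h3 transpose_mult[of A n n P1 n] c by simp
    also have "\<dots> = P1*(transpose_mat P1 * transpose_mat A * (A*P2))"
      using tA1 c by (simp add: assoc_mult_mat[of _ n n _ n _ n])
    also have "\<dots> = P1*((A*P1) * (A*P2))"
      using h3 transpose_mult[of A n n P1 n] c by simp
    also have "\<dots> = (P1*A*P1)*A*P2"
      using c by (simp add: assoc_mult_mat[of _ n n _ n _ n])
    finally show ?thesis using h2 by simp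
  qed
  have e2: "P2 = P1*A*P2"
  proof -
    have "P2 = (P2*A)*P2" using g2 by simp
    also have "\<dots> = (transpose_mat A * transpose_mat P2)*P2"
      using g4 transpose_mult[of P2 n n A n] c by simp
    also have "\<dots> = ((P1*A) * transpose_mat A * transpose_mat P2)*P2"
      using tA2 by simp
    also have "\<dots> = ((P1*A) * (P2*A))*P2"
      using g4 transpose_mult[of P2 n n A n] c by (simp add: assoc_mult_mat[of _ n n _ n _ n])
    also have "\<dots> = P1*A*(P2*A*P2)"
      using c by (simp add: assoc_mult_mat[of _ n n _ n _ n])
    finally show ?thesis using g2 c by (simp add: assoc_mult_mat[of _ n n _ n _ n])
  qed
  show ?thesis using e1 e2 by simp
qed




definition reach :: "nat set set \<Rightarrow> nat \<Rightarrow> nat \<Rightarrow> bool" where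
  "reach E i j \<longleftrightarrow> (\<exists>l. walk_len E i j l)"

lemma reach_refl: "reach E i i"
  unfolding reach_def walk_len_def by (rule exI[of _ 0]) auto

lemma walk_rev: assumes "walk_len E i j l" shows "walk_len E j i l"
proof -
  obtain p where p: "p 0 = i" "p l = j" "\<forall>k<l. {p k, p (Suc k)} \<in> E"
    using assms unfolding walk_len_def by auto
  define q where "q k = p (l - k)" for k
  have "\<forall>k<l. {q k, q (Suc k)} \<in> E"
  proof (intro allI impI)
    fix k assume k: "k < l"
    have "{p (l - Suc k), p (Suc (l - Suc k))} \<in> E" using p(3) k by auto
    moreover have "Suc (l - Suc k) = l - k" using k by auto
    ultimately show "{q k, q (Suc k)} \<in> E" unfolding q_def by (simp add: insert_commute)
  qed
  then show ?thesis unfolding walk_len_def using p by (intro exI[of _ q]) (auto simp: q_def)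
qed

lemma reach_sym: "reach E i j \<Longrightarrow> reach E j i"
  unfolding reach_def using walk_rev by blast

lemma walk_app: assumes "walk_len E i j l1" "walk_len E j k l2" shows "walk_len E i k (l1 + l2)"
proof -
  obtain p where p: "p 0 = i" "p l1 = j" "\<forall>t<l1. {p t, p (Suc t)} \<in> E"
    using assms(1) unfolding walk_len_def by auto
  obtain q where q: "q 0 = j" "q l2 = k" "\<forall>t<l2. {q t, q (Suc t)} \<in> E"
    using assms(2) unfolding walk_len_def by auto
  define r where "r t = (if t \<le> l1 then p t else q (t - l1))" for t
  have "\<forall>t<l1+l2. {r t, r (Suc t)} \<in> E"
  proof (intro allI impI)
    fix t assume t: "t < l1 + l2"
    show "{r t, r (Suc t)} \<in> E"
    proof (cases "t < l1")
      case True then show ?thesis using p(3) by (auto simp: r_def)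
    next
      case False
      then have "Suc t - l1 = Suc (t - l1)" "t - l1 < l2" using t by auto
      then show ?thesis using q p(2) False by (auto simp: r_def)
    qed
  qed
  then show ?thesis unfolding walk_len_def using p q by (intro exI[of _ r]) (auto simp: r_def)
qed

lemma reach_trans: "reach E i j \<Longrightarrow> reach E j k \<Longrightarrow> reach E i k"
  unfolding reach_def using walk_app by blast

lemma walk_edge: "walk_len E i a l \<Longrightarrow> {a,b} \<in> E \<Longrightarrow> walk_len E i b (Suc l)"
proof -
  assume w: "walk_len E i a l" and e: "{a,b} \<in> E"
  have "walk_len E a b 1" unfolding walk_len_def using e
    by (intro exI[of _ "\<lambda>t. if t = 0 then a else b"]) auto
  from walk_app[OF w this] show ?thesis by simp
qed

lemma reach_edge: "{a,b} \<in> E \<Longrightarrow> reach E a b"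
proof -
  assume e: "{a,b} \<in> E"
  have "walk_len E a a 0" unfolding walk_len_def by (rule exI[of _ "\<lambda>_. a"]) simp
  from walk_edge[OF this e] show ?thesis unfolding reach_def by blast
qed

lemma walk_const:
  assumes z: "\<And>a b. {a,b} \<in> E \<Longrightarrow> z a = z b" and w: "walk_len E i j l"
  shows "z i = z j"
proof -
  obtain p where p: "p 0 = i" "p l = j" "\<forall>t<l. {p t, p (Suc t)} \<in> E"
    using w unfolding walk_len_def by auto
  have "\<forall>t\<le>l. z (p t) = z (p 0)"
  proof (intro allI impI)
    fix t assume "t \<le> l" then show "z (p t) = z (p 0)"
    proof (induction t)
      case (Suc t)
      then have "t < l" by simp
      then have "{p t, p (Suc t)} \<in> E" using p(3) by blast
      then have "z (p t) = z (p (Suc t))" by (rule z)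
      moreover have "z (p t) = z (p 0)" using Suc.IH Suc.prems by simp
      ultimately show ?case by simp
    qed simp
  qed
  then have "z (p l) = z (p 0)" by blast
  then show ?thesis using p(1,2) by simp
qed

lemma reach_const: "(\<And>a b. {a,b} \<in> E \<Longrightarrow> z a = z b) \<Longrightarrow> reach E i j \<Longrightarrow> z i = z j"
proof -
  assume z: "\<And>a b. {a,b} \<in> E \<Longrightarrow> z a = z b" and r: "reach E i j"
  then obtain l where "walk_len E i j l" unfolding reach_def by blast
  from walk_const[of E z, OF z this] show ?thesis .
qed

lemma walk_mono: "walk_len E i j l \<Longrightarrow> E \<subseteq> F \<Longrightarrow> walk_len F i j l"
proof -
  assume w: "walk_len E i j l" and EF: "E \<subseteq> F"
  obtain p where p: "p 0 = i" "p l = j" "\<forall>t<l. {p t, p (Suc t)} \<in> E"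
    using w unfolding walk_len_def by auto
  then have "\<forall>t<l. {p t, p (Suc t)} \<in> F" using EF by blast
  then show ?thesis unfolding walk_len_def using p by blast
qed

definition cls :: "nat \<Rightarrow> nat set set \<Rightarrow> nat \<Rightarrow> nat set" where
  "cls n E i = {j. j < n \<and> reach E i j}"

lemma cls_eq: "reach E i j \<Longrightarrow> cls n E i = cls n E j"
  unfolding cls_def using reach_trans reach_sym by blast

lemma cls_finite: "finite (cls n E i)" unfolding cls_def by auto

lemma cls_card_pos: "i < n \<Longrightarrow> card (cls n E i) > 0"
proof -
  assume "i < n"
  then have "i \<in> cls n E i" using reach_refl[of E i] unfolding cls_def by simp
  then show ?thesis using cls_finite[of n E i] card_gt_0_iff by blast
qed

definition pm :: "nat \<Rightarrow> nat set set \<Rightarrow> real mat" where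
  "pm n E = mat n n (\<lambda>(i,j). if reach E i j then 1 / real (card (cls n E i)) else 0)"

lemma pm_carrier[simp]: "pm n E \<in> carrier_mat n n" by (simp add: pm_def)
lemma pm_dims[simp]: "dim_row (pm n E) = n" "dim_col (pm n E) = n" by (simp_all add: pm_def)

lemma pm_entry: "i < n \<Longrightarrow> j < n \<Longrightarrow> pm n E $$ (i,j) = (if reach E i j then 1 / real (card (cls n E i)) else 0)"
  unfolding pm_def by (simp only: index_mat case_prod_conv)

lemma pm_transpose: "transpose_mat (pm n E) = pm n E"
proof (rule eq_matI)
  fix i j assume ij: "i < dim_row (pm n E)" "j < dim_col (pm n E)"
  show "transpose_mat (pm n E) $$ (i, j) = pm n E $$ (i, j)"
  proof (cases "reach E i j")
    case True
    then have "reach E j i" "cls n E j = cls n E i" using reach_sym cls_eq by metis+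
    then show ?thesis using ij True by (simp add: pm_entry)
  next
    case False
    then have "\<not> reach E j i" using reach_sym by metis
    then show ?thesis using ij False by (simp add: pm_entry)
  qed
qed auto




lemma lap_zero:
  assumes G: "simple_graph n E" and z: "z \<in> carrier_vec n"
    and c: "\<And>a b. {a,b} \<in> E \<Longrightarrow> z$a = z$b"
  shows "laplacian n E w *\<^sub>v z = 0\<^sub>v n"
proof (rule eq_vecI)
  fix i assume "i < dim_vec (0\<^sub>v n :: real vec)"
  then have i: "i < n" by simp
  have "unit_vec n i \<bullet> (laplacian n E w *\<^sub>v z) = (laplacian n E w *\<^sub>v z) $ i"
    by (rule scalar_prod_left_unit[OF mult_mat_vec_carrier[OF laplacian_carrier z] i])
  then have "(laplacian n E w *\<^sub>v z) $ i = unit_vec n i \<bullet> (laplacian n E w *\<^sub>v z)" by simp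
  also have "\<dots> = (\<Sum>e\<in>E. w e * ebil e (unit_vec n i) z)"
    using lap_bilin[OF G z, of "unit_vec n i" w] by simp
  also have "\<dots> = 0"
  proof (rule sum.neutral, rule ballI)
    fix e assume e: "e \<in> E"
    from simple_graph_edge[OF G e] obtain a b where ab: "a \<noteq> b" "a < n" "b < n" "e = {a,b}" by iprover
    have "{a,b} \<in> E" using e ab(4) by simp
    then have "z$a = z$b" by (rule c)
    then have "ebil e (unit_vec n i) z = 0" unfolding ab(4) ebil_pair[OF ab(1)] by simp
    then show "w e * ebil e (unit_vec n i) z = 0" by simp
  qed
  finally show "(laplacian n E w *\<^sub>v z) $ i = 0\<^sub>v n $ i" using i by simp
qed auto

lemma simple_graph_edge_lt: "simple_graph n E \<Longrightarrow> {a,b} \<in> E \<Longrightarrow> a < n \<and> b < n"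
  using simple_graph_sub by fastforce

lemma lap_pm: assumes G: "simple_graph n E"
  shows "laplacian n E w * pm n E = 0\<^sub>m n n"
proof (rule eq_matI)
  fix i j assume ij: "i < dim_row (0\<^sub>m n n :: real mat)" "j < dim_col (0\<^sub>m n n :: real mat)"
  then have i: "i < n" and j: "j < n" by auto
  let ?c = "col (pm n E) j"
  have cc: "?c \<in> carrier_vec n" by (simp add: carrier_dim_vec)
  have "laplacian n E w *\<^sub>v ?c = 0\<^sub>v n"
  proof (rule lap_zero[OF G cc])
    fix a b assume e: "{a,b} \<in> E"
    then have ab: "a < n" "b < n" using simple_graph_edge_lt[OF G] by auto
    have r: "reach E a b" using reach_edge[OF e] .
    then have "reach E a j \<longleftrightarrow> reach E b j" using reach_trans reach_sym by metis
    moreover have "cls n E a = cls n E b" using cls_eq[OF r] .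
    ultimately show "?c $ a = ?c $ b" using ab j by (simp add: pm_entry)
  qed
  then have "(laplacian n E w *\<^sub>v ?c) $ i = 0" using i by simp
  then show "(laplacian n E w * pm n E) $$ (i, j) = 0\<^sub>m n n $$ (i, j)"
    using i j by (simp add: index_mult_mat_vec)
qed auto

lemma pm_lap: assumes G: "simple_graph n E"
  shows "pm n E * laplacian n E w = 0\<^sub>m n n"
proof -
  have "transpose_mat (pm n E * laplacian n E w) = transpose_mat (laplacian n E w) * transpose_mat (pm n E)"
    by (rule transpose_mult) auto
  also have "\<dots> = 0\<^sub>m n n" by (simp add: laplacian_transpose pm_transpose lap_pm[OF G])
  finally have "transpose_mat (transpose_mat (pm n E * laplacian n E w)) = transpose_mat (0\<^sub>m n n :: real mat)"
    by simp
  then show ?thesis by simp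
qed

lemma pm_pm: "pm n E * pm n E = pm n E"
proof (rule eq_matI)
  fix i j assume ij: "i < dim_row (pm n E)" "j < dim_col (pm n E)"
  then have i: "i < n" and j: "j < n" by auto
  let ?ci = "real (card (cls n E i))"
  have cpos: "?ci > 0" using cls_card_pos[OF i] by simp
  have "(pm n E * pm n E) $$ (i,j) = (\<Sum>k\<in>{0..<n}. pm n E $$ (i,k) * pm n E $$ (k,j))"
    using i j by (simp add: scalar_prod_def)
  also have "\<dots> = pm n E $$ (i,j)"
  proof (cases "reach E i j")
    case True
    have "(\<Sum>k\<in>{0..<n}. pm n E $$ (i,k) * pm n E $$ (k,j)) = (\<Sum>k\<in>{0..<n}. if k \<in> cls n E i then 1 / ?ci ^ 2 else 0)"
    proof (rule sum.cong[OF refl])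
      fix k assume k: "k \<in> {0..<n}"
      show "pm n E $$ (i,k) * pm n E $$ (k,j) = (if k \<in> cls n E i then 1 / ?ci ^ 2 else 0)"
      proof (cases "reach E i k")
        case rk: True
        then have "reach E k j" using True reach_trans reach_sym by metis
        moreover have "cls n E k = cls n E i" using cls_eq[OF rk] by simp
        ultimately show ?thesis using rk k i j by (simp add: pm_entry cls_def power2_eq_square)
      next
        case False then show ?thesis using k i j by (simp add: pm_entry cls_def)
      qed
    qed
    also have "\<dots> = ?ci * (1 / ?ci ^ 2)"
    proof -
      have "cls n E i \<subseteq> {0..<n}" by (auto simp: cls_def)
      from sum_if_restrict[of "{0..<n}" "cls n E i" "\<lambda>_. 1 / ?ci ^ 2", OF _ this] show ?thesis by simp
    qed
    also have "\<dots> = 1 / ?ci" using cpos by (simp add: power2_eq_square)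
    finally show ?thesis using True i j by (simp add: pm_entry)
  next
    case False
    have "pm n E $$ (i,k) * pm n E $$ (k,j) = 0" if k: "k \<in> {0..<n}" for k
    proof -
      have "\<not> (reach E i k \<and> reach E k j)" using False reach_trans by metis
      then show ?thesis using k i j by (auto simp: pm_entry)
    qed
    then have "(\<Sum>k\<in>{0..<n}. pm n E $$ (i,k) * pm n E $$ (k,j)) = 0" by (intro sum.neutral) blast
    then show ?thesis using False i j by (simp add: pm_entry)
  qed
  finally show "(pm n E * pm n E) $$ (i,j) = pm n E $$ (i,j)" .
qed auto

lemma bvec_dim[simp]: "dim_vec (bvec n u v) = n"
  by (simp add: bvec_def chi_def)

lemma bvec_carrier[simp]: "bvec n u v \<in> carrier_vec n"
  by (simp add: bvec_def chi_def)

lemma bvec_entry: "i < n \<Longrightarrow> bvec n u v $ i = (if i = u then 1 else 0) - (if i = v then 1 else 0)"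
  by (simp add: bvec_def chi_def)

lemma pm_bvec: assumes u: "u < n" and v: "v < n" and r: "reach E u v"
  shows "pm n E *\<^sub>v bvec n u v = 0\<^sub>v n"
proof (rule eq_vecI)
  fix i assume "i < dim_vec (0\<^sub>v n :: real vec)"
  then have i: "i < n" by simp
  have "(pm n E *\<^sub>v bvec n u v) $ i = (\<Sum>k\<in>{0..<n}. pm n E $$ (i,k) * ((if k = u then 1 else 0) - (if k = v then 1 else 0)))"
    using i by (simp add: scalar_prod_def bvec_entry)
  also have "\<dots> = (\<Sum>k\<in>{0..<n}. (if k = u then pm n E $$ (i,k) else 0) - (if k = v then pm n E $$ (i,k) else 0))"
    by (rule sum.cong) auto
  also have "\<dots> = (\<Sum>k\<in>{0..<n}. (if k = u then pm n E $$ (i,k) else 0)) - (\<Sum>k\<in>{0..<n}. (if k = v then pm n E $$ (i,k) else 0))"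
    by (rule sum_subtractf)
  also have "\<dots> = pm n E $$ (i,u) - pm n E $$ (i,v)" using u v by (simp add: sum.delta)
  also have "\<dots> = 0"
  proof -
    have "reach E i u \<longleftrightarrow> reach E i v" using r reach_trans reach_sym by metis
    then show ?thesis using i u v by (simp add: pm_entry)
  qed
  finally show "(pm n E *\<^sub>v bvec n u v) $ i = 0\<^sub>v n $ i" using i by simp
qed auto




lemma mat_eq_minus:
  fixes A B C :: "real mat"
  assumes A: "A \<in> carrier_mat n n" and B: "B \<in> carrier_mat n n" and C: "C \<in> carrier_mat n n"
    and eq: "C = A + B"
  shows "A = C - B"
proof (rule eq_matI)
  fix i j assume "i < dim_row (C - B)" "j < dim_col (C - B)"
  then have ij: "i < n" "j < n" using B C by auto
  have "C $$ (i,j) = A $$ (i,j) + B $$ (i,j)" using eq ij A B by simp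
  then show "A $$ (i,j) = (C - B) $$ (i,j)" using ij B C by simp
qed (use A B C in auto)

lemma mat_vec_zero: "A \<in> carrier_mat k m \<Longrightarrow> A *\<^sub>v 0\<^sub>v m = (0\<^sub>v k :: real vec)"
  by (intro eq_vecI) (auto simp: row_def)

lemma lap_pm_nonsing:
  assumes G: "simple_graph n E" and wpos: "\<forall>e\<in>E. w e > 0"
    and z: "z \<in> carrier_vec n" and Az: "(laplacian n E w + pm n E) *\<^sub>v z = 0\<^sub>v n"
  shows "z = 0\<^sub>v n"
proof -
  let ?L = "laplacian n E w" and ?P = "pm n E"
  have Lc: "?L \<in> carrier_mat n n" and Pc: "?P \<in> carrier_mat n n" by auto
  have PA: "?P * (?L + ?P) = ?P"
    using mult_add_distrib_mat[OF Pc Lc Pc] pm_lap[OF G] pm_pm Pc by simp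
  have "?P *\<^sub>v z = (?P * (?L + ?P)) *\<^sub>v z" using PA by simp
  also have "\<dots> = ?P *\<^sub>v ((?L + ?P) *\<^sub>v z)" using Pc Lc z by (simp add: assoc_mult_mat_vec[of _ n n _ n])
  also have "\<dots> = 0\<^sub>v n" using Az mat_vec_zero[OF Pc] by simp
  finally have Pz: "?P *\<^sub>v z = 0\<^sub>v n" .
  have "(?L + ?P) *\<^sub>v z = ?L *\<^sub>v z + ?P *\<^sub>v z" using add_mult_distrib_mat_vec[OF Lc Pc z] .
  then have Lz: "?L *\<^sub>v z = 0\<^sub>v n" using Az Pz Lc z
    by (metis mult_mat_vec_carrier right_zero_vec)
  have "z \<bullet> (?L *\<^sub>v z) = 0" using Lz z by simp
  then have sum0: "(\<Sum>e\<in>E. w e * ebil e z z) = 0" using lap_bilin[OF G z z] by simp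
  have fin: "finite E" using simple_graph_finite[OF G] .
  have nonneg: "\<forall>e\<in>E. 0 \<le> w e * ebil e z z"
  proof
    fix e assume e: "e \<in> E"
    from simple_graph_edge[OF G e] obtain a b where ab: "a \<noteq> b" "a < n" "b < n" "e = {a,b}" by iprover
    have "ebil e z z = (z$a - z$b)^2" unfolding ab(4) ebil_pair[OF ab(1)] by (simp add: power2_eq_square)
    moreover have "w e > 0" using wpos e by blast
    ultimately show "0 \<le> w e * ebil e z z" by simp
  qed
  have iff: "(\<Sum>e\<in>E. w e * ebil e z z) = 0 \<longleftrightarrow> (\<forall>e\<in>E. w e * ebil e z z = 0)"
    by (rule sum_nonneg_eq_0_iff[OF fin]) (use nonneg in blast)
  have each: "\<forall>e\<in>E. w e * ebil e z z = 0" using iff sum0 by simp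
  have const: "z$a = z$b" if ab: "{a,b} \<in> E" for a b
  proof (cases "a = b")
    case False
    have "w {a,b} * ebil {a,b} z z = 0" using each ab by blast
    moreover have "w {a,b} > 0" using wpos ab by blast
    ultimately have "ebil {a,b} z z = 0" by simp
    then have "(z$a - z$b)^2 = 0" unfolding ebil_pair[OF False] by (simp add: power2_eq_square)
    then show ?thesis by simp
  qed simp
  show ?thesis
  proof (rule eq_vecI)
    fix i assume "i < dim_vec (0\<^sub>v n :: real vec)"
    then have i: "i < n" by simp
    let ?ci = "real (card (cls n E i))"
    have cpos: "?ci > 0" using cls_card_pos[OF i] by simp
    have "(?P *\<^sub>v z) $ i = (\<Sum>k\<in>{0..<n}. ?P $$ (i,k) * z $ k)"
      using i z by (simp add: scalar_prod_def)
    also have "\<dots> = (\<Sum>k\<in>{0..<n}. if k \<in> cls n E i then z $ i / ?ci else 0)"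
    proof (rule sum.cong[OF refl])
      fix k assume k: "k \<in> {0..<n}"
      show "?P $$ (i,k) * z $ k = (if k \<in> cls n E i then z $ i / ?ci else 0)"
      proof (cases "reach E i k")
        case True
        have "z $ i = z $ k" using reach_const[of E "\<lambda>t. z $ t", OF const True] by simp
        then show ?thesis using True k i by (simp add: pm_entry cls_def)
      next
        case False then show ?thesis using k i by (simp add: pm_entry cls_def)
      qed
    qed
    also have "\<dots> = ?ci * (z $ i / ?ci)"
    proof -
      have "cls n E i \<subseteq> {0..<n}" by (auto simp: cls_def)
      from sum_if_restrict[of "{0..<n}" "cls n E i" "\<lambda>_. z $ i / ?ci", OF _ this] show ?thesis by simp
    qed
    also have "\<dots> = z $ i" using cpos by simp
    finally show "z $ i = 0\<^sub>v n $ i" using Pz i by simp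
  qed (use z in simp)
qed

lemma lap_pm_inv:
  assumes G: "simple_graph n E" and wpos: "\<forall>e\<in>E. w e > 0"
  shows "\<exists>Q \<in> carrier_mat n n. Q * (laplacian n E w + pm n E) = 1\<^sub>m n \<and> (laplacian n E w + pm n E) * Q = 1\<^sub>m n"
proof -
  let ?A = "laplacian n E w + pm n E"
  have Ac: "?A \<in> carrier_mat n n" by simp
  have "det ?A \<noteq> 0"
  proof
    assume "det ?A = 0"
    then obtain z where z: "z \<in> carrier_vec n" "z \<noteq> 0\<^sub>v n" "?A *\<^sub>v z = 0\<^sub>v n"
      using det_0_iff_vec_prod_zero_field[OF Ac] by blast
    then show False using lap_pm_nonsing[OF G wpos z(1) z(3)] by simp
  qed
  from det_non_zero_imp_unit[OF Ac this, of "()"]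
  show ?thesis unfolding Units_def ring_mat_def by auto
qed




lemma mat_minus_zero: "(X :: real mat) \<in> carrier_mat n n \<Longrightarrow> X - 0\<^sub>m n n = X"
  by (intro eq_matI) auto

lemma pinv_lap:
  assumes G: "simple_graph n E" and wpos: "\<forall>e\<in>E. w e > 0"
  shows "pinv n (laplacian n E w) \<in> carrier_mat n n \<and>
         laplacian n E w * pinv n (laplacian n E w) = 1\<^sub>m n - pm n E"
proof -
  let ?L = "laplacian n E w" and ?M = "pm n E"
  let ?A = "?L + ?M"
  obtain Q where Q: "Q \<in> carrier_mat n n" and QA: "Q * ?A = 1\<^sub>m n" and AQ: "?A * Q = 1\<^sub>m n"
    using lap_pm_inv[OF G wpos] by blast
  have Lc: "?L \<in> carrier_mat n n" and Mc: "?M \<in> carrier_mat n n" and Ac: "?A \<in> carrier_mat n n" by auto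
  have hmL: "?M * ?L = 0\<^sub>m n n" by (rule pm_lap[OF G])
  have LM: "?L * ?M = 0\<^sub>m n n" by (rule lap_pm[OF G])
  have MM: "?M * ?M = ?M" by (rule pm_pm)
  have MA: "?M * ?A = ?M" using mult_add_distrib_mat[OF Mc Lc Mc] hmL MM Mc by simp
  have AM: "?A * ?M = ?M" using add_mult_distrib_mat[OF Lc Mc Mc] LM MM Mc by simp
  have MQ: "?M * Q = ?M"
  proof -
    have "?M * Q = (?M * ?A) * Q" using MA by simp
    also have "\<dots> = ?M * (?A * Q)" using Mc Ac Q by (simp add: assoc_mult_mat[of _ n n _ n _ n])
    finally show ?thesis using AQ Mc by simp
  qed
  have QM: "Q * ?M = ?M"
  proof -
    have "Q * ?M = Q * (?A * ?M)" using AM by simp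
    also have "\<dots> = (Q * ?A) * ?M" using Mc Ac Q by (simp add: assoc_mult_mat[of _ n n _ n _ n])
    finally show ?thesis using QA Mc by simp
  qed
  have LQ: "?L * Q = 1\<^sub>m n - ?M"
    by (rule mat_eq_minus[of _ n]) (use Lc Q Mc AQ add_mult_distrib_mat[OF Lc Mc Q] MQ in auto)
  have QL: "Q * ?L = 1\<^sub>m n - ?M"
    by (rule mat_eq_minus[of _ n]) (use Lc Q Mc QA mult_add_distrib_mat[OF Q Lc Mc] QM in auto)
  have oneMc: "1\<^sub>m n - ?M \<in> carrier_mat n n" by (rule minus_carrier_mat[OF Mc])
  define P where "P = Q - ?M"
  have Pc: "P \<in> carrier_mat n n" unfolding P_def by (rule minus_carrier_mat[OF Mc])
  have LP: "?L * P = 1\<^sub>m n - ?M"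
    unfolding P_def using mult_minus_distrib_mat[OF Lc Q Mc] LQ LM mat_minus_zero[OF oneMc] by simp
  have PL: "P * ?L = 1\<^sub>m n - ?M"
    unfolding P_def using minus_mult_distrib_mat[OF Q Mc Lc] QL hmL mat_minus_zero[OF oneMc] by simp
  have MP: "?M * P = 0\<^sub>m n n"
    unfolding P_def using mult_minus_distrib_mat[OF Mc Q Mc] MQ MM Mc by simp
  have oneMP: "(1\<^sub>m n - ?M) * P = P"
    using minus_mult_distrib_mat[OF one_carrier_mat Mc Pc] MP Pc mat_minus_zero[OF Pc] by simp
  have oneML: "(1\<^sub>m n - ?M) * ?L = ?L"
    using minus_mult_distrib_mat[OF one_carrier_mat Mc Lc] hmL Lc mat_minus_zero[OF Lc] by simp
  have tr: "transpose_mat (1\<^sub>m n - ?M) = 1\<^sub>m n - ?M"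
    using transpose_minus[OF one_carrier_mat Mc] pm_transpose by simp
  have ip: "is_pinv n ?L P"
    unfolding is_pinv_def using Pc LP PL oneMP oneML tr by simp
  have "pinv n ?L = P"
    unfolding pinv_def
    by (rule the_equality[where P="is_pinv n ?L", OF ip]) (use pinv_unique[OF Lc ip] in blast)
  then show ?thesis using Pc LP by simp
qed




lemma cs_sum:
  fixes a b :: "'i \<Rightarrow> real"
  shows "(\<Sum>i\<in>I. a i * b i)\<^sup>2 \<le> (\<Sum>i\<in>I. (a i)\<^sup>2) * (\<Sum>i\<in>I. (b i)\<^sup>2)"
proof (cases "finite I")
  case False then show ?thesis by simp
next
  case fin: True
  show ?thesis
  proof (cases "(\<Sum>i\<in>I. (b i)\<^sup>2) > 0")
    case False
    then have "(\<Sum>i\<in>I. (b i)\<^sup>2) = 0" using sum_nonneg[of I "\<lambda>i. (b i)\<^sup>2"] by simp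
    then have "\<forall>i\<in>I. (b i)\<^sup>2 = 0" using sum_nonneg_eq_0_iff[OF fin, of "\<lambda>i. (b i)\<^sup>2"] by simp
    then have "\<forall>i\<in>I. b i = 0" by simp
    then show ?thesis by simp
  next
    case True
    define r where "r = (\<Sum>i\<in>I. a i * b i) / (\<Sum>i\<in>I. (b i)\<^sup>2)"
    have "0 \<le> (\<Sum>i\<in>I. (a i - r * b i)\<^sup>2)" by (simp add: sum_nonneg)
    also have "\<dots> = (\<Sum>i\<in>I. (a i)\<^sup>2) - 2 * r * (\<Sum>i\<in>I. a i * b i) + r\<^sup>2 * (\<Sum>i\<in>I. (b i)\<^sup>2)"
      by (simp add: algebra_simps power2_eq_square sum_distrib_left sum_subtractf sum.distrib)
    also have "\<dots> = (\<Sum>i\<in>I. (a i)\<^sup>2) - (\<Sum>i\<in>I. a i * b i)\<^sup>2 / (\<Sum>i\<in>I. (b i)\<^sup>2)"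
      using True by (simp add: r_def power2_eq_square)
    finally have "(\<Sum>i\<in>I. a i * b i)\<^sup>2 / (\<Sum>i\<in>I. (b i)\<^sup>2) \<le> (\<Sum>i\<in>I. (a i)\<^sup>2)" by simp
    then show ?thesis using True by (simp add: pos_divide_le_eq)
  qed
qed

lemma wcs_sum:
  fixes w a b :: "'i \<Rightarrow> real"
  assumes w: "\<forall>i\<in>I. w i \<ge> 0"
  shows "(\<Sum>i\<in>I. w i * (a i * b i))\<^sup>2 \<le> (\<Sum>i\<in>I. w i * (a i)\<^sup>2) * (\<Sum>i\<in>I. w i * (b i)\<^sup>2)"
proof -
  have e1: "(\<Sum>i\<in>I. w i * (a i * b i)) = (\<Sum>i\<in>I. (sqrt (w i) * a i) * (sqrt (w i) * b i))"
  proof (rule sum.cong[OF refl])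
    fix i assume "i \<in> I" then have "sqrt (w i) * sqrt (w i) = w i" using w by simp
    then show "w i * (a i * b i) = (sqrt (w i) * a i) * (sqrt (w i) * b i)" by (metis mult.assoc mult.left_commute)
  qed
  have e2: "(\<Sum>i\<in>I. w i * (a i)\<^sup>2) = (\<Sum>i\<in>I. (sqrt (w i) * a i)\<^sup>2)"
    by (rule sum.cong[OF refl]) (use w in \<open>simp add: power_mult_distrib\<close>)
  have e3: "(\<Sum>i\<in>I. w i * (b i)\<^sup>2) = (\<Sum>i\<in>I. (sqrt (w i) * b i)\<^sup>2)"
    by (rule sum.cong[OF refl]) (use w in \<open>simp add: power_mult_distrib\<close>)
  show ?thesis unfolding e1 e2 e3 by (rule cs_sum)
qed

definition ends :: "nat set \<Rightarrow> nat \<times> nat" where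
  "ends e = (SOME p. fst p \<noteq> snd p \<and> e = {fst p, snd p})"

definition dd :: "nat set \<Rightarrow> real vec \<Rightarrow> real" where
  "dd e x = x $ fst (ends e) - x $ snd (ends e)"

lemma ebil_dd: assumes G: "simple_graph n E" and e: "e \<in> E"
  shows "ebil e y x = dd e y * dd e x"
proof -
  from simple_graph_edge[OF G e] obtain a b where ab: "a \<noteq> b" "e = {a,b}" by iprover
  have "\<exists>p. fst p \<noteq> snd p \<and> e = {fst p, snd p}" using ab by (intro exI[of _ "(a,b)"]) simp
  then have "fst (ends e) \<noteq> snd (ends e) \<and> e = {fst (ends e), snd (ends e)}"
    unfolding ends_def by (rule someI_ex)
  then show ?thesis unfolding dd_def using ebil_pair by metis
qed

lemma bvec_scalar: assumes u: "u < n" and v: "v < n" and x: "x \<in> carrier_vec n"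
  shows "bvec n u v \<bullet> x = x $ u - x $ v"
proof -
  have "bvec n u v \<bullet> x = (\<Sum>k\<in>{0..<n}. ((if k = u then 1 else 0) - (if k = v then 1 else 0)) * x $ k)"
    using x by (simp add: scalar_prod_def bvec_entry)
  also have "\<dots> = (\<Sum>k\<in>{0..<n}. (if k = u then x $ k else 0) - (if k = v then x $ k else 0))"
    by (rule sum.cong) auto
  also have "\<dots> = (\<Sum>k\<in>{0..<n}. (if k = u then x $ k else 0)) - (\<Sum>k\<in>{0..<n}. (if k = v then x $ k else 0))"
    by (rule sum_subtractf)
  also have "\<dots> = x $ u - x $ v" using u v by (simp add: sum.delta)
  finally show ?thesis .
qed

lemma eff_res_lb:
  assumes G: "simple_graph n E" and wpos: "\<forall>e\<in>E. w e > 0"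
    and u: "u < n" and v: "v < n" and r: "reach E u v" and x: "x \<in> carrier_vec n"
  shows "(x $ u - x $ v)\<^sup>2 \<le> eff_res n (laplacian n E w) u v * (x \<bullet> (laplacian n E w *\<^sub>v x))"
proof -
  let ?L = "laplacian n E w" and ?P = "pinv n (laplacian n E w)" and ?b = "bvec n u v"
  have Lc: "?L \<in> carrier_mat n n" by simp
  have Pc: "?P \<in> carrier_mat n n" and LP: "?L * ?P = 1\<^sub>m n - pm n E" using pinv_lap[OF G wpos] by auto
  define y where "y = ?P *\<^sub>v ?b"
  have yc: "y \<in> carrier_vec n" unfolding y_def using Pc by simp
  have Ly: "?L *\<^sub>v y = ?b"
  proof -
    have "?L *\<^sub>v y = (?L * ?P) *\<^sub>v ?b" unfolding y_def using Lc Pc by (simp add: assoc_mult_mat_vec[of _ n n _ n])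
    also have "\<dots> = ?b - pm n E *\<^sub>v ?b" unfolding LP
      using minus_mult_distrib_mat_vec[OF one_carrier_mat pm_carrier bvec_carrier] by simp
    also have "\<dots> = ?b" using pm_bvec[OF u v r] by simp
    finally show ?thesis .
  qed
  have eff: "eff_res n ?L u v = y \<bullet> (?L *\<^sub>v y)"
    unfolding eff_res_def y_def[symmetric] using Ly yc comm_scalar_prod[OF bvec_carrier yc] by simp
  have bx: "x $ u - x $ v = y \<bullet> (?L *\<^sub>v x)"
  proof -
    have "x $ u - x $ v = ?b \<bullet> x" using bvec_scalar[OF u v x] by simp
    also have "\<dots> = (transpose_mat ?L *\<^sub>v y) \<bullet> x" using Ly laplacian_transpose by simp
    also have "\<dots> = y \<bullet> (?L *\<^sub>v x)" by (rule transpose_vec_mult_scalar[OF Lc x yc])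
    finally show ?thesis .
  qed
  have w0: "\<forall>e\<in>E. w e \<ge> 0" using wpos by (simp add: less_imp_le)
  have s1: "y \<bullet> (?L *\<^sub>v x) = (\<Sum>e\<in>E. w e * (dd e y * dd e x))"
    using lap_bilin[OF G x yc] ebil_dd[OF G] by simp
  have s2: "y \<bullet> (?L *\<^sub>v y) = (\<Sum>e\<in>E. w e * (dd e y)\<^sup>2)"
    using lap_bilin[OF G yc yc] ebil_dd[OF G] by (simp add: power2_eq_square)
  have s3: "x \<bullet> (?L *\<^sub>v x) = (\<Sum>e\<in>E. w e * (dd e x)\<^sup>2)"
    using lap_bilin[OF G x x] ebil_dd[OF G] by (simp add: power2_eq_square)
  show ?thesis unfolding bx eff s1 s2 s3 by (rule wcs_sum[OF w0])
qed




lemma smult_quad: fixes A :: "real mat" assumes A: "A \<in> carrier_mat n n" and x: "x \<in> carrier_vec n"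
  shows "x \<bullet> ((k \<cdot>\<^sub>m A) *\<^sub>v x) = k * (x \<bullet> (A *\<^sub>v x))"
proof -
  have "(k \<cdot>\<^sub>m A) *\<^sub>v x = k \<cdot>\<^sub>v (A *\<^sub>v x)"
  proof (rule eq_vecI)
    fix i assume "i < dim_vec (k \<cdot>\<^sub>v (A *\<^sub>v x))"
    then have i: "i < n" using A by simp
    show "((k \<cdot>\<^sub>m A) *\<^sub>v x) $ i = (k \<cdot>\<^sub>v (A *\<^sub>v x)) $ i"
    proof -
      have d: "dim_vec (row A i) = dim_vec x" using A x by simp
      show ?thesis using i A scalar_prod_smult_left[OF d, of k] by (simp add: row_smult)
    qed
  qed (use A in simp)
  then show ?thesis using A x by simp
qed

lemma sq_sum_single:
  fixes g :: "nat \<Rightarrow> real"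
  assumes fin: "finite K" and uniq: "\<And>k j. k \<in> K \<Longrightarrow> j \<in> K \<Longrightarrow> P k \<Longrightarrow> P j \<Longrightarrow> k = j"
  shows "(\<Sum>k\<in>K. if P k then g k else 0)\<^sup>2 = (\<Sum>k\<in>K. if P k then (g k)\<^sup>2 else 0)"
proof (cases "\<exists>k\<in>K. P k")
  case False
  then have np: "\<forall>k\<in>K. \<not> P k" by blast
  have z1: "(\<Sum>k\<in>K. if P k then g k else 0) = 0" using np by (intro sum.neutral) simp
  have z2: "(\<Sum>k\<in>K. if P k then (g k)\<^sup>2 else 0) = 0" using np by (intro sum.neutral) simp
  show ?thesis unfolding z1 z2 by simp
next
  case True
  then obtain k0 where k0: "k0 \<in> K" "P k0" by blast
  have iff: "\<forall>k\<in>K. P k \<longleftrightarrow> k = k0" using uniq k0 by blast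
  have e1: "(\<Sum>k\<in>K. if P k then g k else 0) = (\<Sum>k\<in>K. if k = k0 then g k else 0)"
    using iff by (intro sum.cong) auto
  have e2: "(\<Sum>k\<in>K. if P k then (g k)\<^sup>2 else 0) = (\<Sum>k\<in>K. if k = k0 then (g k)\<^sup>2 else 0)"
    using iff by (intro sum.cong) auto
  show ?thesis unfolding e1 e2 using fin k0 by (simp add: sum.delta)
qed

lemma sum_shift_le:
  fixes f :: "nat \<Rightarrow> real"
  assumes "\<And>k. f k \<ge> 0"
  shows "(\<Sum>k<s. if k = 0 then 0 else f (k - 1)) \<le> (\<Sum>k<s. f k)"
proof (cases s)
  case 0 then show ?thesis by simp
next
  case (Suc t)
  have "(\<Sum>k<Suc t. if k = 0 then 0 else f (k - 1)) = (\<Sum>k<t. f k)"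
    unfolding sum.lessThan_Suc_shift by simp
  also have "\<dots> \<le> (\<Sum>k<Suc t. f k)" using assms by simp
  finally show ?thesis using Suc by simp
qed

lemma sum_shift_suc:
  fixes f :: "nat \<Rightarrow> real"
  shows "(\<Sum>k<s. f (Suc k)) = (\<Sum>k<s. f k) + f s - f 0"
  using sum.lessThan_Suc_shift[of f s] sum.lessThan_Suc[of f s] by simp

lemma ivt_nat:
  fixes f :: "nat \<Rightarrow> nat"
  assumes "f 0 \<le> k" "k < f m"
  shows "\<exists>i<m. f i \<le> k \<and> k < f (Suc i)"
  using assms
proof (induction m)
  case 0 then show ?case by simp
next
  case (Suc m)
  show ?case
  proof (cases "k < f m")
    case True
    then obtain i where "i < m" "f i \<le> k" "k < f (Suc i)" using Suc.IH Suc.prems(1) by blast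
    then show ?thesis by (intro exI[of _ i]) simp
  next
    case False
    then show ?thesis using Suc.prems(2) by (intro exI[of _ m]) simp
  qed
qed

locale spset =
  fixes n :: nat and E EH :: "nat set set" and w :: "nat set \<Rightarrow> real" and eps :: real and u v :: nat
  assumes G: "simple_graph n E" and sp: "spectral_sparsifier n eps E EH w"
    and eps_pos: "0 < eps" and eps_le: "eps \<le> 1/100"
    and u: "u < n" and v: "v < n" and wk: "\<exists>l. walk_len EH u v l"
begin

lemma EH_sub: "EH \<subseteq> E" using sp unfolding spectral_sparsifier_def by blast
lemma wpos: "\<forall>e\<in>EH. w e > 0" using sp unfolding spectral_sparsifier_def by blast
lemma GH: "simple_graph n EH" using G EH_sub unfolding simple_graph_def by blast
lemma finE: "finite E" using simple_graph_finite[OF G] .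
lemma finEH: "finite EH" using simple_graph_finite[OF GH] .

abbreviation "LG \<equiv> ulaplacian n E"
abbreviation "LH \<equiv> laplacian n EH w"

lemma spec_lo: "x \<in> carrier_vec n \<Longrightarrow> (1 - eps) * (x \<bullet> (LH *\<^sub>v x)) \<le> x \<bullet> (LG *\<^sub>v x)"
  using sp smult_quad[OF laplacian_carrier, of x n "1 - eps" EH w]
  unfolding spectral_sparsifier_def loewner_le_def by auto

lemma spec_hi: "x \<in> carrier_vec n \<Longrightarrow> x \<bullet> (LG *\<^sub>v x) \<le> (1 + eps) * (x \<bullet> (LH *\<^sub>v x))"
  using sp smult_quad[OF laplacian_carrier, of x n "1 + eps" EH w]
  unfolding spectral_sparsifier_def loewner_le_def by auto

definition s :: nat where "s = hop_dist EH u v"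

lemma walk_s: "walk_len EH u v s"
  unfolding s_def hop_dist_def using wk by (metis LeastI)

definition lay :: "nat \<Rightarrow> nat" where
  "lay i = (if reach EH u i then min (hop_dist EH u i) s else s)"

lemma lay_le: "lay i \<le> s" unfolding lay_def by auto

lemma hop_walk: "reach EH u i \<Longrightarrow> walk_len EH u i (hop_dist EH u i)"
  unfolding reach_def hop_dist_def by (metis LeastI)

lemma hop_le: "walk_len EH u i l \<Longrightarrow> hop_dist EH u i \<le> l"
  unfolding hop_dist_def by (rule Least_le)

lemma lay_u: "lay u = 0"
proof -
  have "walk_len EH u u 0" unfolding walk_len_def by (rule exI[of _ "\<lambda>_. u"]) simp
  then have "hop_dist EH u u = 0" using hop_le by fastforce
  then show ?thesis unfolding lay_def using reach_refl by simp
qed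

lemma lay_v: "lay v = s"
proof -
  have "reach EH u v" unfolding reach_def using wk .
  then show ?thesis unfolding lay_def s_def by simp
qed

lemma lay_edge: assumes e: "{a,b} \<in> EH" shows "lay b \<le> lay a + 1"
proof (cases "reach EH u a")
  case True
  have "walk_len EH u b (Suc (hop_dist EH u a))" using walk_edge[OF hop_walk[OF True] e] .
  then have "hop_dist EH u b \<le> Suc (hop_dist EH u a)" "reach EH u b"
    using hop_le unfolding reach_def by blast+
  then show ?thesis using True unfolding lay_def by auto
next
  case False
  have "\<not> reach EH u b"
  proof
    assume "reach EH u b"
    moreover have "reach EH b a" using reach_edge[of b a EH] e by (simp add: insert_commute)
    ultimately show False using False reach_trans by blast
  qed
  then show ?thesis using False unfolding lay_def by simp
qed

definition cr :: "nat \<Rightarrow> nat \<Rightarrow> nat \<Rightarrow> bool" where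
  "cr a b k \<longleftrightarrow> (lay a \<le> k \<and> k < lay b) \<or> (lay b \<le> k \<and> k < lay a)"

definition ecr :: "nat set \<Rightarrow> nat \<Rightarrow> bool" where
  "ecr e k \<longleftrightarrow> (\<exists>a\<in>e. \<exists>b\<in>e. lay a \<le> k \<and> k < lay b)"

lemma ecr_pair: "ecr {a,b} k \<longleftrightarrow> cr a b k"
  unfolding ecr_def cr_def by auto

lemma ecr_lt: "ecr e k \<Longrightarrow> k < s"
proof -
  assume "ecr e k"
  then obtain b where "k < lay b" unfolding ecr_def by blast
  then show ?thesis using lay_le[of b] by linarith
qed

lemma ecr_H_uniq: assumes e: "e \<in> EH" and k: "ecr e k" and j: "ecr e j" shows "k = j"
proof -
  from simple_graph_edge[OF GH e] obtain a b where ab: "a \<noteq> b" "e = {a,b}" by iprover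
  have "lay b \<le> lay a + 1" using lay_edge e ab by simp
  moreover have "lay a \<le> lay b + 1" using lay_edge[of b a] e ab by (simp add: insert_commute)
  ultimately show ?thesis using k j unfolding ab(2) ecr_pair cr_def by auto
qed

definition pot :: "(nat \<Rightarrow> real) \<Rightarrow> real vec" where
  "pot \<delta> = vec n (\<lambda>i. \<Sum>k<s. if k < lay i then \<delta> k else 0)"

lemma pot_carrier[simp]: "pot \<delta> \<in> carrier_vec n" unfolding pot_def by simp

lemma pot_diff: assumes a: "a < n" and b: "b < n"
  shows "(pot \<delta> $ a - pot \<delta> $ b)\<^sup>2 = (\<Sum>k<s. if cr a b k then \<delta> k else 0)\<^sup>2"
proof (cases "lay b \<le> lay a")
  case True
  have "pot \<delta> $ a - pot \<delta> $ b = (\<Sum>k<s. (if k < lay a then \<delta> k else 0) - (if k < lay b then \<delta> k else 0))"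
    using a b by (simp add: pot_def sum_subtractf)
  also have "\<dots> = (\<Sum>k<s. if cr a b k then \<delta> k else 0)"
    by (rule sum.cong[OF refl]) (use True in \<open>auto simp: cr_def\<close>)
  finally show ?thesis by simp
next
  case False
  have "pot \<delta> $ b - pot \<delta> $ a = (\<Sum>k<s. (if k < lay b then \<delta> k else 0) - (if k < lay a then \<delta> k else 0))"
    using a b by (simp add: pot_def sum_subtractf)
  also have "\<dots> = (\<Sum>k<s. if cr a b k then \<delta> k else 0)"
    by (rule sum.cong[OF refl]) (use False in \<open>auto simp: cr_def\<close>)
  finally have "(pot \<delta> $ b - pot \<delta> $ a)\<^sup>2 = (\<Sum>k<s. if cr a b k then \<delta> k else 0)\<^sup>2" by simp
  then show ?thesis by (simp add: power2_commute)
qed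

lemma ebil_pot: assumes GG: "simple_graph n F" and e: "e \<in> F"
  shows "ebil e (pot \<delta>) (pot \<delta>) = (\<Sum>k<s. if ecr e k then \<delta> k else 0)\<^sup>2"
proof -
  from simple_graph_edge[OF GG e] obtain a b where ab: "a \<noteq> b" "a < n" "b < n" "e = {a,b}" by iprover
  show ?thesis unfolding ab(4) ebil_pair[OF ab(1)] ecr_pair
    using pot_diff[OF ab(2,3)] by (simp add: power2_eq_square)
qed

lemma qG_pot: "pot \<delta> \<bullet> (LG *\<^sub>v pot \<delta>) = (\<Sum>e\<in>E. (\<Sum>k<s. if ecr e k then \<delta> k else 0)\<^sup>2)"
  unfolding ulaplacian_def using lap_bilin[OF G pot_carrier pot_carrier] ebil_pot[OF G] by simp

definition cw :: "nat \<Rightarrow> real" where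
  "cw k = (\<Sum>e\<in>EH. if ecr e k then w e else 0)"

lemma cw_nonneg: "cw k \<ge> 0"
  unfolding cw_def using wpos by (intro sum_nonneg) (auto simp: less_imp_le)

lemma qH_pot: "pot \<delta> \<bullet> (LH *\<^sub>v pot \<delta>) = (\<Sum>k<s. (\<delta> k)\<^sup>2 * cw k)"
proof -
  have "pot \<delta> \<bullet> (LH *\<^sub>v pot \<delta>) = (\<Sum>e\<in>EH. w e * (\<Sum>k<s. if ecr e k then \<delta> k else 0)\<^sup>2)"
    using lap_bilin[OF GH pot_carrier pot_carrier] ebil_pot[OF GH] by simp
  also have "\<dots> = (\<Sum>e\<in>EH. w e * (\<Sum>k<s. if ecr e k then (\<delta> k)\<^sup>2 else 0))"
  proof (rule sum.cong[OF refl])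
    fix e assume e: "e \<in> EH"
    show "w e * (\<Sum>k<s. if ecr e k then \<delta> k else 0)\<^sup>2 = w e * (\<Sum>k<s. if ecr e k then (\<delta> k)\<^sup>2 else 0)"
      using sq_sum_single[of "{..<s}" "ecr e" \<delta>] ecr_H_uniq[OF e] by simp
  qed
  also have "\<dots> = (\<Sum>e\<in>EH. \<Sum>k<s. if ecr e k then (\<delta> k)\<^sup>2 * w e else 0)"
    by (simp add: sum_distrib_left mult.commute if_distrib cong: if_cong)
  also have "\<dots> = (\<Sum>k<s. \<Sum>e\<in>EH. if ecr e k then (\<delta> k)\<^sup>2 * w e else 0)"
    by (rule sum.swap)
  also have "\<dots> = (\<Sum>k<s. (\<delta> k)\<^sup>2 * cw k)"
    unfolding cw_def by (simp add: sum_distrib_left if_distrib cong: if_cong)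
  finally show ?thesis .
qed

end




lemma sum_ind_card: "finite A \<Longrightarrow> (\<Sum>x\<in>A. if P x then (1::real) else 0) = real (card {x\<in>A. P x})"
  by (simp add: sum.inter_filter[symmetric])

context spset begin

definition NN :: "nat \<Rightarrow> real" where "NN k = real (card {e\<in>E. ecr e k})"
definition BB :: "nat \<Rightarrow> real" where "BB k = real (card {e\<in>E. ecr e k \<and> ecr e (Suc k)})"
definition mm :: "nat \<Rightarrow> real" where "mm j = real (card {i. i < n \<and> lay i = j})"

lemma NN_nonneg: "NN k \<ge> 0" unfolding NN_def by simp
lemma BB_nonneg: "BB k \<ge> 0" unfolding BB_def by simp
lemma mm_nonneg: "mm k \<ge> 0" unfolding mm_def by simp

lemma NN_s: "NN s = 0"
proof -
  have "{e\<in>E. ecr e s} = {}" using ecr_lt by blast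
  then show ?thesis unfolding NN_def by (metis card.empty of_nat_0)
qed

lemma test1: assumes k: "k < s" shows "(1 - eps) * cw k \<le> NN k"
proof -
  define \<delta> where "\<delta> = (\<lambda>j::nat. if j = k then (1::real) else 0)"
  have row: "(\<Sum>j<s. if ecr e j then \<delta> j else 0) = (if ecr e k then 1 else 0)" for e
  proof -
    have "(\<Sum>j<s. if ecr e j then \<delta> j else 0) = (\<Sum>j<s. if j = k then (if ecr e k then 1 else 0) else 0)"
      unfolding \<delta>_def by (intro sum.cong) auto
    also have "\<dots> = (if ecr e k then 1 else 0)" using k by (simp add: sum.delta)
    finally show ?thesis .
  qed
  have qG: "pot \<delta> \<bullet> (LG *\<^sub>v pot \<delta>) = NN k"
  proof -
    have "pot \<delta> \<bullet> (LG *\<^sub>v pot \<delta>) = (\<Sum>e\<in>E. (if ecr e k then 1 else 0)\<^sup>2)" unfolding qG_pot row ..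
    also have "\<dots> = (\<Sum>e\<in>E. if ecr e k then 1 else 0)" by (intro sum.cong) auto
    also have "\<dots> = NN k" unfolding NN_def using sum_ind_card[OF finE] .
    finally show ?thesis .
  qed
  have qH: "pot \<delta> \<bullet> (LH *\<^sub>v pot \<delta>) = cw k"
  proof -
    have "pot \<delta> \<bullet> (LH *\<^sub>v pot \<delta>) = (\<Sum>j<s. if j = k then cw j else 0)"
      unfolding qH_pot \<delta>_def by (intro sum.cong) auto
    also have "\<dots> = cw k" using k by (simp add: sum.delta)
    finally show ?thesis .
  qed
  show ?thesis using spec_lo[OF pot_carrier, of \<delta>] qG qH by simp
qed

lemma test2: assumes k: "Suc k < s"
  shows "NN k + NN (Suc k) + 2 * BB k \<le> (1 + eps) * (cw k + cw (Suc k))"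
proof -
  define \<delta> where "\<delta> = (\<lambda>j::nat. if j = k \<or> j = Suc k then (1::real) else 0)"
  let ?a = "\<lambda>e. if ecr e k then (1::real) else 0"
  let ?b = "\<lambda>e. if ecr e (Suc k) then (1::real) else 0"
  let ?c = "\<lambda>e. if ecr e k \<and> ecr e (Suc k) then (1::real) else 0"
  have row: "(\<Sum>j<s. if ecr e j then \<delta> j else 0) = ?a e + ?b e" for e
  proof -
    have "(\<Sum>j<s. if ecr e j then \<delta> j else 0) = (\<Sum>j<s. (if j = k then ?a e else 0) + (if j = Suc k then ?b e else 0))"
      unfolding \<delta>_def by (intro sum.cong) auto
    also have "\<dots> = ?a e + ?b e" using k by (simp add: sum.distrib sum.delta)
    finally show ?thesis .
  qed
  have sq: "(?a e + ?b e)\<^sup>2 = ?a e + ?b e + 2 * ?c e" for e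
    by (auto simp: power2_eq_square)
  have qG: "pot \<delta> \<bullet> (LG *\<^sub>v pot \<delta>) = NN k + NN (Suc k) + 2 * BB k"
  proof -
    have "pot \<delta> \<bullet> (LG *\<^sub>v pot \<delta>) = (\<Sum>e\<in>E. ?a e + ?b e + 2 * ?c e)" unfolding qG_pot row sq ..
    also have "\<dots> = (\<Sum>e\<in>E. ?a e) + (\<Sum>e\<in>E. ?b e) + 2 * (\<Sum>e\<in>E. ?c e)"
      by (simp add: sum.distrib sum_distrib_left)
    also have "\<dots> = NN k + NN (Suc k) + 2 * BB k"
      unfolding NN_def BB_def using sum_ind_card[OF finE] by presburger
    finally show ?thesis .
  qed
  have qH: "pot \<delta> \<bullet> (LH *\<^sub>v pot \<delta>) = cw k + cw (Suc k)"
  proof -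
    have "pot \<delta> \<bullet> (LH *\<^sub>v pot \<delta>) = (\<Sum>j<s. (if j = k then cw j else 0) + (if j = Suc k then cw j else 0))"
      unfolding qH_pot \<delta>_def by (intro sum.cong) auto
    also have "\<dots> = cw k + cw (Suc k)" using k by (simp add: sum.distrib sum.delta)
    finally show ?thesis .
  qed
  show ?thesis using spec_hi[OF pot_carrier, of \<delta>] qG qH by simp
qed

lemma BB_bound: "64 * BB k \<le> NN k + NN (Suc k)"
proof (cases "Suc k < s")
  case False
  have "{e\<in>E. ecr e k \<and> ecr e (Suc k)} = {}" using ecr_lt False by blast
  then have "BB k = 0" unfolding BB_def by (metis card.empty of_nat_0)
  then show ?thesis using NN_nonneg[of k] NN_nonneg[of "Suc k"] by simp
next
  case True
  let ?X = "NN k + NN (Suc k)" and ?C = "cw k + cw (Suc k)" and ?B = "BB k"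
  have h1: "(1 - eps) * ?C \<le> ?X" using test1[of k] test1[of "Suc k"] True by (simp add: distrib_left)
  have h2: "?X + 2 * ?B \<le> (1 + eps) * ?C" using test2[OF True] by simp
  have e1: "0 < 1 - eps" using eps_le by simp
  have "(1 - eps) * (?X + 2 * ?B) \<le> (1 - eps) * ((1 + eps) * ?C)"
    using h2 e1 by (simp add: mult_left_mono)
  also have "\<dots> = (1 + eps) * ((1 - eps) * ?C)" by simp
  also have "\<dots> \<le> (1 + eps) * ?X" using h1 eps_pos by (simp add: mult_left_mono)
  finally have h3: "(1 - eps) * (?X + 2 * ?B) \<le> (1 + eps) * ?X" .
  then have "2 * (1 - eps) * ?B \<le> 2 * eps * ?X" by (simp add: algebra_simps)
  then have h4: "(1 - eps) * ?B \<le> eps * ?X" by (simp add: algebra_simps)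
  have X0: "?X \<ge> 0" using NN_nonneg[of k] NN_nonneg[of "Suc k"] by simp
  have B0: "?B \<ge> 0" using BB_nonneg by simp
  have "64 * ((1 - eps) * ?B) \<le> 64 * (eps * ?X)" using h4 by simp
  also have "\<dots> = (64 * eps) * ?X" by simp
  also have "\<dots> \<le> (1 - eps) * ?X" using eps_le X0 by (intro mult_right_mono) auto
  finally have "(1 - eps) * (64 * ?B) \<le> (1 - eps) * ?X" by simp
  then show ?thesis using e1 by simp
qed

end




context spset begin

definition BBp :: "nat \<Rightarrow> real" where "BBp k = (if k = 0 then 0 else BB (k - 1))"

lemma count_NN: "NN k \<le> mm k * mm (Suc k) + BBp k + BB k"
proof -
  let ?S1 = "{e\<in>E. 0 < k \<and> ecr e (k - 1) \<and> ecr e (Suc (k - 1))}"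
  let ?S2 = "{e\<in>E. ecr e k \<and> ecr e (Suc k)}"
  let ?V1 = "{i. i < n \<and> lay i = k}" and ?V2 = "{i. i < n \<and> lay i = Suc k}"
  let ?S3 = "(\<lambda>(a,b). {a,b}) ` (?V1 \<times> ?V2)"
  have sub: "{e\<in>E. ecr e k} \<subseteq> ?S1 \<union> ?S2 \<union> ?S3"
  proof
    fix e assume "e \<in> {e\<in>E. ecr e k}"
    then have e: "e \<in> E" and ek: "ecr e k" by auto
    from simple_graph_edge[OF G e] obtain a b where ab: "a \<noteq> b" "a < n" "b < n" "e = {a,b}" by iprover
    from ek obtain x y where xy: "x \<in> e" "y \<in> e" "lay x \<le> k" "k < lay y" unfolding ecr_def by blast
    have xy2: "x < n" "y < n" using xy ab by auto
    show "e \<in> ?S1 \<union> ?S2 \<union> ?S3"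
    proof (cases "lay x < k")
      case True
      then have "lay x \<le> k - 1" "k - 1 < lay y" "Suc (k - 1) = k" using xy by auto
      then have "ecr e (k - 1)" "ecr e (Suc (k - 1))" using xy unfolding ecr_def by metis+
      then show ?thesis using e True by auto
    next
      case False
      then have lx: "lay x = k" using xy by simp
      show ?thesis
      proof (cases "Suc k < lay y")
        case True
        then have "lay x \<le> Suc k" using xy by simp
        then have "ecr e (Suc k)" using xy True unfolding ecr_def by blast
        then show ?thesis using e ek by auto
      next
        case False
        then have ly: "lay y = Suc k" using xy by simp
        have "e = {x, y}" using ab xy lx ly by auto
        moreover have "(x, y) \<in> ?V1 \<times> ?V2" using lx ly xy2 by simp
        ultimately have "e \<in> ?S3" by force
        then show ?thesis by blast
      qed
    qed
  qed
  have fin3: "finite ?S3" by simp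
  have "card {e\<in>E. ecr e k} \<le> card (?S1 \<union> ?S2 \<union> ?S3)"
    by (rule card_mono[OF _ sub]) (use finE fin3 in simp)
  also have "\<dots> \<le> card ?S1 + card ?S2 + card ?S3"
    by (meson add_le_mono card_Un_le le_refl order_trans)
  also have "card ?S3 \<le> card (?V1 \<times> ?V2)" by (rule card_image_le) simp
  also have "card (?V1 \<times> ?V2) = card ?V1 * card ?V2" by (rule card_cartesian_product)
  finally have c: "card {e\<in>E. ecr e k} \<le> card ?S1 + card ?S2 + card ?V1 * card ?V2" by simp
  have "real (card ?S1) = BBp k"
  proof (cases "k = 0")
    case True
    have "?S1 = {}" using True by simp
    then show ?thesis unfolding BBp_def using True by (metis card.empty of_nat_0)
  next
    case False
    then have eq: "?S1 = {e\<in>E. ecr e (k - 1) \<and> ecr e (Suc (k - 1))}" by simp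
    show ?thesis unfolding BBp_def BB_def by (subst if_not_P[OF False]) (simp only: eq)
  qed
  moreover have "real (card {e\<in>E. ecr e k}) \<le> real (card ?S1) + real (card ?S2) + real (card ?V1) * real (card ?V2)"
  proof -
    from c have "real (card {e\<in>E. ecr e k}) \<le> real (card ?S1 + card ?S2 + card ?V1 * card ?V2)"
      by (simp only: of_nat_le_iff)
    then show ?thesis by (simp only: of_nat_add of_nat_mult)
  qed
  ultimately show ?thesis unfolding NN_def BB_def mm_def by linarith
qed

lemma mm_sum: assumes inj: "inj_on f K" and fin: "finite K"
  shows "(\<Sum>k\<in>K. mm (f k)) \<le> real n"
proof -
  let ?A = "\<lambda>k. {i. i < n \<and> lay i = f k}"
  have "(\<Sum>k\<in>K. card (?A k)) = card (\<Union>k\<in>K. ?A k)"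
    by (rule card_UN_disjoint[symmetric]) (use fin inj in \<open>auto dest: inj_onD\<close>)
  also have "\<dots> \<le> card {0..<n}" by (rule card_mono) auto
  finally have "(\<Sum>k\<in>K. card (?A k)) \<le> n" by simp
  then have "real (\<Sum>k\<in>K. card (?A k)) \<le> real n" by linarith
  then show ?thesis unfolding mm_def by simp
qed

lemma T_bound: "(\<Sum>k<s. sqrt (NN k)) \<le> 2 * real n"
proof -
  let ?T = "\<Sum>k<s. sqrt (NN k)"
  have sB: "sqrt (BB k) \<le> (sqrt (NN k) + sqrt (NN (Suc k))) / 8" for k
  proof -
    have "sqrt (BB k) \<le> sqrt ((NN k + NN (Suc k)) / 64)" using BB_bound[of k] by simp
    also have "\<dots> = sqrt (NN k + NN (Suc k)) / 8" by (simp add: real_sqrt_divide)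
    also have "\<dots> \<le> (sqrt (NN k) + sqrt (NN (Suc k))) / 8"
      using sqrt_add_le_add_sqrt[OF NN_nonneg NN_nonneg] by simp
    finally show ?thesis .
  qed
  have sN: "sqrt (NN k) \<le> (mm k + mm (Suc k)) / 2 + (if k = 0 then 0 else sqrt (BB (k - 1))) + sqrt (BB k)" for k
  proof -
    have "sqrt (NN k) \<le> sqrt (mm k * mm (Suc k) + BBp k + BB k)" using count_NN by simp
    also have "\<dots> \<le> sqrt (mm k * mm (Suc k) + BBp k) + sqrt (BB k)"
      by (rule sqrt_add_le_add_sqrt) (use mm_nonneg BB_nonneg in \<open>auto simp: BBp_def\<close>)
    also have "\<dots> \<le> sqrt (mm k * mm (Suc k)) + sqrt (BBp k) + sqrt (BB k)"
      using sqrt_add_le_add_sqrt[of "mm k * mm (Suc k)" "BBp k"] mm_nonneg BB_nonneg by (simp add: BBp_def)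
    also have "sqrt (mm k * mm (Suc k)) \<le> (mm k + mm (Suc k)) / 2"
      by (rule arith_geo_mean_sqrt) (use mm_nonneg in auto)
    finally show ?thesis unfolding BBp_def by (simp split: if_splits)
  qed
  have "?T \<le> (\<Sum>k<s. (mm k + mm (Suc k)) / 2 + (if k = 0 then 0 else sqrt (BB (k - 1))) + sqrt (BB k))"
    by (rule sum_mono) (rule sN)
  also have "\<dots> = (\<Sum>k<s. mm k) / 2 + (\<Sum>k<s. mm (Suc k)) / 2 + (\<Sum>k<s. if k = 0 then 0 else sqrt (BB (k - 1))) + (\<Sum>k<s. sqrt (BB k))"
    by (simp add: sum.distrib sum_divide_distrib add_divide_distrib)
  also have "\<dots> \<le> real n / 2 + real n / 2 + (\<Sum>k<s. sqrt (BB k)) + (\<Sum>k<s. sqrt (BB k))"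
  proof -
    have "(\<Sum>k<s. mm k) \<le> real n" using mm_sum[of id "{..<s}"] by simp
    moreover have "(\<Sum>k<s. mm (Suc k)) \<le> real n" using mm_sum[of Suc "{..<s}"] by simp
    moreover have "(\<Sum>k<s. if k = 0 then 0 else sqrt (BB (k - 1))) \<le> (\<Sum>k<s. sqrt (BB k))"
      by (rule sum_shift_le) (simp add: BB_nonneg)
    ultimately show ?thesis by linarith
  qed
  also have "(\<Sum>k<s. sqrt (BB k)) \<le> (\<Sum>k<s. (sqrt (NN k) + sqrt (NN (Suc k))) / 8)"
    by (rule sum_mono) (rule sB)
  also have "\<dots> = (?T + (\<Sum>k<s. sqrt (NN (Suc k)))) / 8"
    by (simp only: sum_divide_distrib[symmetric] sum.distrib)
  also have "(\<Sum>k<s. sqrt (NN (Suc k))) \<le> ?T"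
    using sum_shift_suc[of "\<lambda>k. sqrt (NN k)" s] NN_s NN_nonneg[of 0] by simp
  finally have "?T \<le> real n + ?T / 2" by simp
  then show ?thesis by simp
qed

lemma cw_pos: assumes k: "k < s" shows "cw k > 0"
proof -
  obtain p where p: "p 0 = u" "p s = v" "\<forall>i<s. {p i, p (Suc i)} \<in> EH"
    using walk_s unfolding walk_len_def by blast
  have "lay (p 0) \<le> k" "k < lay (p s)" using p lay_u lay_v k by auto
  from ivt_nat[of "\<lambda>i. lay (p i)", OF this] obtain i where i: "i < s" "lay (p i) \<le> k" "k < lay (p (Suc i))"
    by blast
  let ?e = "{p i, p (Suc i)}"
  have e: "?e \<in> EH" using p i by blast
  have ek: "ecr ?e k" unfolding ecr_def using i by blast
  have "w ?e \<le> cw k"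
  proof -
    have "(if ecr ?e k then w ?e else 0) \<le> (\<Sum>e\<in>EH. if ecr e k then w e else 0)"
      by (rule member_le_sum[OF e]) (use wpos finEH in \<open>auto simp: less_imp_le\<close>)
    then show ?thesis using ek unfolding cw_def by simp
  qed
  then show ?thesis using wpos e by fastforce
qed

end




context spset begin

lemma s0_case: assumes "s = 0" shows "eff_res n L u v = 0"
proof -
  have "walk_len EH u v 0" using walk_s assms by simp
  then have uv: "u = v" unfolding walk_len_def by auto
  have b0: "bvec n u v = 0\<^sub>v n" unfolding uv by (intro eq_vecI) (auto simp: bvec_entry)
  have "pinv n L *\<^sub>v 0\<^sub>v n \<in> carrier_vec (dim_row (pinv n L))" by (simp add: carrier_dim_vec)
  then show ?thesis unfolding eff_res_def b0 by (simp add: scalar_prod_def)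
qed

lemma main_bound:
  shows "real s ^ 3 \<le> 5 * real n ^ 2 * eff_res n LG u v \<and> real s ^ 3 \<le> 5 * real n ^ 2 * eff_res n LH u v"
proof (cases "s = 0")
  case True
  then show ?thesis using s0_case by simp
next
  case False
  then have spos: "s > 0" by simp
  define \<delta> where "\<delta> k = 1 / sqrt (cw k)" for k
  define x where "x = pot \<delta>"
  define D where "D = (\<Sum>k<s. \<delta> k)"
  define S where "S = (\<Sum>k<s. sqrt (cw k))"
  define T where "T = (\<Sum>k<s. sqrt (NN k))"
  have cwp: "\<And>k. k < s \<Longrightarrow> cw k > 0" using cw_pos by blast
  have dpos: "\<And>k. k < s \<Longrightarrow> \<delta> k > 0" using cwp unfolding \<delta>_def by simp
  have xc: "x \<in> carrier_vec n" unfolding x_def by simp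
  have xu: "x $ u = 0" unfolding x_def pot_def using u lay_u by simp
  have xv: "x $ v = D" unfolding x_def pot_def D_def using v lay_v by simp
  have qH: "x \<bullet> (LH *\<^sub>v x) = real s"
  proof -
    have "x \<bullet> (LH *\<^sub>v x) = (\<Sum>k<s. (\<delta> k)\<^sup>2 * cw k)" unfolding x_def by (rule qH_pot)
    also have "\<dots> = (\<Sum>k<s. 1)"
    proof (rule sum.cong[OF refl])
      fix k assume "k \<in> {..<s}"
      then have "cw k > 0" using cwp by simp
      then show "(\<delta> k)\<^sup>2 * cw k = 1" unfolding \<delta>_def by (simp add: power_divide)
    qed
    finally show ?thesis by simp
  qed
  have qG0: "x \<bullet> (LG *\<^sub>v x) \<ge> 0" unfolding x_def qG_pot by (intro sum_nonneg) simp
  have qG: "x \<bullet> (LG *\<^sub>v x) \<le> (1 + eps) * real s" using spec_hi[OF xc] qH by simp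
  have cs: "(real s)\<^sup>2 \<le> D * S"
  proof -
    have "(\<Sum>k<s. sqrt (\<delta> k) * sqrt (sqrt (cw k)))\<^sup>2 \<le> (\<Sum>k<s. (sqrt (\<delta> k))\<^sup>2) * (\<Sum>k<s. (sqrt (sqrt (cw k)))\<^sup>2)"
      by (rule cs_sum)
    moreover have "(\<Sum>k<s. sqrt (\<delta> k) * sqrt (sqrt (cw k))) = real s"
    proof -
      have "(\<Sum>k<s. sqrt (\<delta> k) * sqrt (sqrt (cw k))) = (\<Sum>k<s. 1)"
      proof (rule sum.cong[OF refl])
        fix k assume "k \<in> {..<s}"
        then have c: "cw k > 0" using cwp by simp
        have "sqrt (\<delta> k) * sqrt (sqrt (cw k)) = sqrt (\<delta> k * sqrt (cw k))" by (simp add: real_sqrt_mult)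
        also have "\<delta> k * sqrt (cw k) = 1" unfolding \<delta>_def using c by simp
        finally show "sqrt (\<delta> k) * sqrt (sqrt (cw k)) = 1" by simp
      qed
      then show ?thesis by simp
    qed
    moreover have "(\<Sum>k<s. (sqrt (\<delta> k))\<^sup>2) = D" unfolding D_def
      by (rule sum.cong[OF refl]) (use dpos in \<open>simp add: less_imp_le\<close>)
    moreover have "(\<Sum>k<s. (sqrt (sqrt (cw k)))\<^sup>2) = S" unfolding S_def
    proof (rule sum.cong[OF refl])
      fix k :: nat
      have "cw k \<ge> 0" by (rule cw_nonneg)
      then show "(sqrt (sqrt (cw k)))\<^sup>2 = sqrt (cw k)" by simp
    qed
    ultimately show ?thesis by simp
  qed
  have e1: "0 < 1 - eps" using eps_le by simp
  have ST: "sqrt (1 - eps) * S \<le> T"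
  proof -
    have "sqrt (1 - eps) * S = (\<Sum>k<s. sqrt ((1 - eps) * cw k))"
      unfolding S_def by (simp add: sum_distrib_left real_sqrt_mult)
    also have "\<dots> \<le> T" unfolding T_def
      by (rule sum_mono) (use test1 in simp)
    finally show ?thesis .
  qed
  have T2: "T \<le> 2 * real n" unfolding T_def by (rule T_bound)
  have D0: "D \<ge> 0" unfolding D_def using dpos by (intro sum_nonneg) (simp add: less_imp_le)
  have S0: "S \<ge> 0" unfolding S_def by (intro sum_nonneg real_sqrt_ge_zero cw_nonneg)
  have k1: "(real s)\<^sup>2 * sqrt (1 - eps) \<le> D * (2 * real n)"
  proof -
    have "(real s)\<^sup>2 * sqrt (1 - eps) \<le> D * S * sqrt (1 - eps)"
      using cs e1 by (intro mult_right_mono) auto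
    also have "\<dots> = D * (sqrt (1 - eps) * S)" by simp
    also have "\<dots> \<le> D * (2 * real n)" using ST T2 D0 by (intro mult_left_mono) auto
    finally show ?thesis .
  qed
  have k2: "(real s) ^ 4 * (1 - eps) \<le> 4 * (real n)\<^sup>2 * D\<^sup>2"
  proof -
    have "((real s)\<^sup>2 * sqrt (1 - eps))\<^sup>2 \<le> (D * (2 * real n))\<^sup>2"
      using k1 by (intro power_mono) (use e1 in auto)
    moreover have "((real s)\<^sup>2 * sqrt (1 - eps))\<^sup>2 = (real s) ^ 4 * (1 - eps)"
      using e1 by (simp add: power_mult_distrib real_sqrt_pow2 flip: power_mult)
    moreover have "(D * (2 * real n))\<^sup>2 = 4 * (real n)\<^sup>2 * D\<^sup>2"
      by (simp add: power_mult_distrib)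
    ultimately show ?thesis by simp
  qed
  have r: "reach EH u v" unfolding reach_def using wk .
  have rG: "reach E u v" using r EH_sub walk_mono unfolding reach_def by blast
  have lbH: "D\<^sup>2 \<le> eff_res n LH u v * real s"
    using eff_res_lb[OF GH wpos u v r xc] xu xv qH by simp
  have lbG: "D\<^sup>2 \<le> eff_res n LG u v * (x \<bullet> (LG *\<^sub>v x))"
    using eff_res_lb[OF G _ u v rG xc, of "\<lambda>_. 1"] xu xv unfolding ulaplacian_def by simp
  have s4pos: "(real s) ^ 4 * (1 - eps) > 0" using spos e1 by simp
  have n0: "real n > 0" using u by simp
  have Dpos: "D\<^sup>2 > 0"
  proof -
    have p: "0 < 4 * (real n)\<^sup>2 * D\<^sup>2" using k2 s4pos by linarith
    have "D\<^sup>2 \<noteq> 0" by (rule notI) (use p in simp)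
    then show ?thesis by simp
  qed
  have H: "real s ^ 3 \<le> 5 * real n ^ 2 * eff_res n LH u v"
  proof -
    have "(real s) ^ 4 * (1 - eps) \<le> 4 * (real n)\<^sup>2 * (eff_res n LH u v * real s)"
    proof -
      have "4 * (real n)\<^sup>2 * D\<^sup>2 \<le> 4 * (real n)\<^sup>2 * (eff_res n LH u v * real s)"
        by (rule mult_left_mono[OF lbH]) simp
      then show ?thesis using k2 by linarith
    qed
    then have "real s * ((real s) ^ 3 * (1 - eps)) \<le> real s * (4 * (real n)\<^sup>2 * eff_res n LH u v)"
      by (simp add: algebra_simps power_numeral_reduce)
    then have a: "(real s) ^ 3 * (1 - eps) \<le> 4 * (real n)\<^sup>2 * eff_res n LH u v" using spos by simp
    have "(real s) ^ 3 * (4/5) \<le> (real s) ^ 3 * (1 - eps)" using eps_le by (intro mult_left_mono) auto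
    then show ?thesis using a by simp
  qed
  have RG0: "eff_res n LG u v \<ge> 0"
  proof (rule ccontr)
    assume "\<not> ?thesis"
    then have "eff_res n LG u v * (x \<bullet> (LG *\<^sub>v x)) \<le> 0" using qG0 by (simp add: mult_nonpos_nonneg)
    then show False using lbG Dpos by simp
  qed
  have Gb: "real s ^ 3 \<le> 5 * real n ^ 2 * eff_res n LG u v"
  proof -
    have "eff_res n LG u v * (x \<bullet> (LG *\<^sub>v x)) \<le> eff_res n LG u v * ((1 + eps) * real s)"
      by (rule mult_left_mono[OF qG RG0])
    then have lbG2: "D\<^sup>2 \<le> eff_res n LG u v * ((1 + eps) * real s)" using lbG by linarith
    then have "(real s) ^ 4 * (1 - eps) \<le> 4 * (real n)\<^sup>2 * (eff_res n LG u v * ((1 + eps) * real s))"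
    proof -
      have "4 * (real n)\<^sup>2 * D\<^sup>2 \<le> 4 * (real n)\<^sup>2 * (eff_res n LG u v * ((1 + eps) * real s))"
        by (rule mult_left_mono[OF lbG2]) simp
      then show ?thesis using k2 by linarith
    qed
    then have "real s * ((real s) ^ 3 * (1 - eps)) \<le> real s * (4 * (1 + eps) * (real n)\<^sup>2 * eff_res n LG u v)"
      by (simp add: algebra_simps power_numeral_reduce)
    then have a: "(real s) ^ 3 * (1 - eps) \<le> 4 * (1 + eps) * (real n)\<^sup>2 * eff_res n LG u v" using spos by simp
    have b: "4 * (1 + eps) * (real n)\<^sup>2 * eff_res n LG u v \<le> (5 * (1 - eps)) * ((real n)\<^sup>2 * eff_res n LG u v)"
    proof -
      have "4 * (1 + eps) \<le> 5 * (1 - eps)" using eps_le by simp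
      moreover have "0 \<le> (real n)\<^sup>2 * eff_res n LG u v" using RG0 by simp
      ultimately have "(4 * (1 + eps)) * ((real n)\<^sup>2 * eff_res n LG u v) \<le> (5 * (1 - eps)) * ((real n)\<^sup>2 * eff_res n LG u v)"
        by (rule mult_right_mono)
      then show ?thesis by (simp add: mult.assoc)
    qed
    have "(1 - eps) * (real s ^ 3) \<le> (1 - eps) * (5 * real n ^ 2 * eff_res n LG u v)"
      using a b by (simp add: algebra_simps)
    then show ?thesis using e1 by simp
  qed
  show ?thesis using H Gb by simp
qed

end




theorem corollary4p1:
  shows "\<exists>eps0 > 0. \<exists>C > 0. \<exists>k :: nat.
    \<forall>(n :: nat) (E :: nat set set) (EH :: nat set set) (w :: nat set \<Rightarrow> real) (eps :: real) (u :: nat) (v :: nat).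
      simple_graph n E \<longrightarrow> 0 < eps \<longrightarrow> eps \<le> eps0 \<longrightarrow>
      spectral_sparsifier n eps E EH w \<longrightarrow>
      u < n \<longrightarrow> v < n \<longrightarrow> (\<exists>l. walk_len EH u v l) \<longrightarrow>
      eff_res n (ulaplacian n E) u v \<ge> C * real (hop_dist EH u v) ^ 3 / (real n ^ 2 * (1 + ln (real n)) ^ k) \<and>
      eff_res n (laplacian n EH w) u v \<ge> C * real (hop_dist EH u v) ^ 3 / (real n ^ 2 * (1 + ln (real n)) ^ k)"
proof -
  have key: "\<forall>(n :: nat) (E :: nat set set) (EH :: nat set set) (w :: nat set \<Rightarrow> real) (eps :: real) (u :: nat) (v :: nat).
      simple_graph n E \<longrightarrow> 0 < eps \<longrightarrow> eps \<le> 1/100 \<longrightarrow>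
      spectral_sparsifier n eps E EH w \<longrightarrow>
      u < n \<longrightarrow> v < n \<longrightarrow> (\<exists>l. walk_len EH u v l) \<longrightarrow>
      eff_res n (ulaplacian n E) u v \<ge> (1/5) * real (hop_dist EH u v) ^ 3 / (real n ^ 2 * (1 + ln (real n)) ^ 0) \<and>
      eff_res n (laplacian n EH w) u v \<ge> (1/5) * real (hop_dist EH u v) ^ 3 / (real n ^ 2 * (1 + ln (real n)) ^ 0)"
  proof (intro allI impI)
    fix n E EH w eps u v
    assume a: "simple_graph n E" "0 < eps" "eps \<le> (1::real)/100" "spectral_sparsifier n eps E EH w"
      "u < n" "v < n" "\<exists>l. walk_len EH u v l"
    interpret spset n E EH w eps u v by unfold_locales (use a in auto)
    have mb: "real s ^ 3 \<le> 5 * real n ^ 2 * eff_res n LG u v" "real s ^ 3 \<le> 5 * real n ^ 2 * eff_res n LH u v"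
      using main_bound by auto
    have n0: "real n ^ 2 > 0" using a(5) by simp
    have conv: "(1/5) * real s ^ 3 / (real n ^ 2 * (1 + ln (real n)) ^ 0) \<le> R"
      if "real s ^ 3 \<le> 5 * real n ^ 2 * R" for R
    proof -
      have "(1/5) * real s ^ 3 / (real n ^ 2 * (1 + ln (real n)) ^ 0) = real s ^ 3 / (5 * real n ^ 2)" by simp
      also have "\<dots> \<le> R" using that n0 by (simp add: divide_le_eq mult.commute)
      finally show ?thesis .
    qed
    show "eff_res n (ulaplacian n E) u v \<ge> (1/5) * real (hop_dist EH u v) ^ 3 / (real n ^ 2 * (1 + ln (real n)) ^ 0) \<and>
      eff_res n (laplacian n EH w) u v \<ge> (1/5) * real (hop_dist EH u v) ^ 3 / (real n ^ 2 * (1 + ln (real n)) ^ 0)"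
      using conv[OF mb(1)] conv[OF mb(2)] unfolding s_def by simp
  qed
  show ?thesis
    by (rule exI[of _ "1/100"], simp only: zero_less_divide_iff, rule conjI, simp,
        rule exI[of _ "1/5"], rule conjI, simp, rule exI[of _ 0], rule key)
qed



end
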